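(* Let $m>1$ and $a\in\mathbb{Z}_m$ with $2a^2-2a+1\equiv0\pmod m$. Then the quadratical quasigroup $(\mathbb{Z}_m,\cdot)$, $x\cdot y=ax+(1-a)y$, is not isomorphic to its dual $(\mathbb{Z}_m,\circ)$, $x\circ y=(1-a)x+ay$; i.e. no quadratical quasigroup induced by $\mathbb{Z}_m$ is self-dual.
   Context: The dual of a groupoid $(Q,\cdot)$ is $(Q,* )$ with $x*y=y\cdot x$; a groupoid is self-dual if it is isomorphic to its dual. Every quadratical quasigroup induced by the additive group $\mathbb{Z}_m$ has the form $x\cdot y=ax+(1-a)y$ with $2a^2-2a+1\equiv0\pmod m$. *)

theory Defs
  imports Main
begin

text \<open>Z_m is represented by the carrier {0..<m} of integers with arithmetic mod m.\<close>

definition zm :: "int \<Rightarrow> int set" where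
  "zm m = {0..<m}"

definition qop :: "int \<Rightarrow> int \<Rightarrow> int \<Rightarrow> int \<Rightarrow> int" where
  "qop m a x y = (a * x + (1 - a) * y) mod m"

definition dual_op :: "('a \<Rightarrow> 'a \<Rightarrow> 'a) \<Rightarrow> 'a \<Rightarrow> 'a \<Rightarrow> 'a" where
  "dual_op op x y = op y x"

definition groupoid_iso :: "'a set \<Rightarrow> ('a \<Rightarrow> 'a \<Rightarrow> 'a) \<Rightarrow> 'b set \<Rightarrow> ('b \<Rightarrow> 'b \<Rightarrow> 'b) \<Rightarrow> ('a \<Rightarrow> 'b) \<Rightarrow> bool" where
  "groupoid_iso Q op1 Q' op2 f \<longleftrightarrow>
     bij_betw f Q Q' \<and> (\<forall>x\<in>Q. \<forall>y\<in>Q. f (op1 x y) = op2 (f x) (f y))"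

definition self_dual :: "'a set \<Rightarrow> ('a \<Rightarrow> 'a \<Rightarrow> 'a) \<Rightarrow> bool" where
  "self_dual Q op \<longleftrightarrow> (\<exists>f. groupoid_iso Q op Q (dual_op op) f)"

end

theory Submission
  imports Defs
begin

theorem corollary9p5:
  fixes m a :: int
  assumes "m > 1"
    and "a \<in> zm m"
    and "(2 * a^2 - 2 * a + 1) mod m = 0"
  shows "\<not> self_dual (zm m) (qop m a)"
proof
  assume "self_dual (zm m) (qop m a)"
  then obtain f where bij: "bij_betw f (zm m) (zm m)"
    and hom: "\<forall>x\<in>zm m. \<forall>y\<in>zm m. f (qop m a x y) = qop m a (f y) (f x)"
    unfolding self_dual_def groupoid_iso_def dual_op_def by blast
  have m0: "m > 0" using assms(1) by simp
  have dvdq: "m dvd (2 * a^2 - 2 * a + 1)" using assms(3) by (simp add: dvd_eq_mod_eq_0)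
  define F where "F x = f (x mod m)" for x
  have inz: "x mod m \<in> zm m" for x using m0 by (simp add: zm_def)
  have Fhom: "m dvd (F (a*x+(1-a)*y) - ((1-a)*F x + a*F y))" for x y
  proof -
    have e: "qop m a (x mod m) (y mod m) = (a*x+(1-a)*y) mod m"
      unfolding qop_def
    proof -
      have "(a*(x mod m)) mod m = (a*x) mod m" by (rule mod_mult_right_eq)
      moreover have "((1-a)*(y mod m)) mod m = ((1-a)*y) mod m" by (rule mod_mult_right_eq)
      ultimately show "(a*(x mod m) + (1-a)*(y mod m)) mod m = (a*x+(1-a)*y) mod m" by (rule mod_add_cong)
    qed
    have "F (a*x+(1-a)*y) = f (qop m a (x mod m) (y mod m))"
      using e unfolding F_def by simp
    also have "\<dots> = qop m a (F y) (F x)"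
      using hom inz unfolding F_def by blast
    also have "\<dots> = (a * F y + (1-a) * F x) mod m" by (simp add: qop_def)
    also have "\<dots> = ((1-a)*F x + a*F y) mod m" by (simp add: add.commute)
    finally have "F (a*x+(1-a)*y) mod m = ((1-a)*F x + a*F y) mod m" by simp
    then show ?thesis by (simp add: mod_eq_dvd_iff)
  qed
  have Fcong: "x mod m = y mod m \<Longrightarrow> F x = F y" for x y by (simp add: F_def)
  define G where "G x = F x - F 0" for x
  have G0: "G 0 = 0" by (simp add: G_def)
  have Ghom: "m dvd (G (a*x+(1-a)*y) - ((1-a)*G x + a*G y))" for x y
  proof -
    have "G (a*x+(1-a)*y) - ((1-a)*G x + a*G y) = F (a*x+(1-a)*y) - ((1-a)*F x + a*F y)"
      by (simp add: G_def algebra_simps)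
    then show ?thesis using Fhom by simp
  qed
  have Gcong: "x mod m = y mod m \<Longrightarrow> G x = G y" for x y by (simp add: G_def F_def)
  have G1: "m dvd (G (a*x) - (1-a)*G x)" for x using Ghom[of x 0] G0 by simp
  have G2: "m dvd (G ((1-a)*y) - a*G y)" for y using Ghom[of 0 y] G0 by simp
  have u1: "m dvd (a*(2-2*a) - 1)"
  proof -
    have "a*(2-2*a) - 1 = - (2 * a^2 - 2 * a + 1)" by (simp add: algebra_simps power2_eq_square)
    then show ?thesis using dvdq by (simp only: dvd_minus_iff)
  qed
  have u2: "m dvd ((1-a)*(2*a) - 1)"
  proof -
    have "(1-a)*(2*a) - 1 = - (2 * a^2 - 2 * a + 1)" by (simp add: algebra_simps power2_eq_square)
    then show ?thesis using dvdq by (simp only: dvd_minus_iff)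
  qed
  have Gadd: "m dvd (G (u+v) - G u - G v)" for u v
  proof -
    define u' where "u' = (2-2*a)*u"
    define v' where "v' = 2*a*v"
    have c1: "m dvd (a*u' - u)"
    proof -
      have "a*u' - u = (a*(2-2*a) - 1)*u" by (simp add: u'_def algebra_simps)
      then show ?thesis using u1 by simp
    qed
    have c2: "m dvd ((1-a)*v' - v)"
    proof -
      have "(1-a)*v' - v = ((1-a)*(2*a) - 1)*v" by (simp add: v'_def algebra_simps)
      then show ?thesis using u2 by simp
    qed
    have e1: "G (a*u') = G u" using c1 Gcong by (simp add: mod_eq_dvd_iff)
    have e2: "G ((1-a)*v') = G v" using c2 Gcong by (simp add: mod_eq_dvd_iff)
    have c3: "m dvd ((a*u'+(1-a)*v') - (u+v))"
    proof -
      have "(a*u'+(1-a)*v') - (u+v) = (a*u' - u) + ((1-a)*v' - v)" by simp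
      then show ?thesis using c1 c2 by (metis dvd_add)
    qed
    have e3: "G (a*u'+(1-a)*v') = G (u+v)" using c3 Gcong by (simp add: mod_eq_dvd_iff)
    have "G (u+v) - G u - G v = (G (a*u'+(1-a)*v') - ((1-a)*G u' + a*G v'))
         - (G (a*u') - (1-a)*G u') - (G ((1-a)*v') - a*G v')"
      unfolding e1[symmetric] e2[symmetric] e3[symmetric] by (simp add: algebra_simps)
    then show ?thesis using Ghom[of u' v'] G1[of u'] G2[of v'] by (metis dvd_diff)
  qed
  have Glin: "m dvd (G (int n) - int n * G 1)" for n :: nat
  proof (induction n)
    case 0 then show ?case using G0 by simp
  next
    case (Suc n)
    have "G (int (Suc n)) - int (Suc n) * G 1 = (G (int n + 1) - G (int n) - G 1) + (G (int n) - int n * G 1)"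
      by (simp add: algebra_simps)
    then show ?case using Gadd[of "int n" 1] Suc.IH by (metis dvd_add)
  qed
  have a0: "a \<ge> 0" using assms(2) by (simp add: zm_def)
  have ga: "m dvd (G a - a * G 1)" using Glin[of "nat a"] a0 by simp
  have gb: "m dvd (G a - (1-a) * G 1)" using G1[of 1] by simp
  have h: "m dvd ((2*a - 1) * G 1)"
  proof -
    have "(2*a - 1) * G 1 = (G a - (1-a) * G 1) - (G a - a * G 1)" by (simp add: algebra_simps)
    then show ?thesis using ga gb by (metis dvd_diff)
  qed
  have "m dvd G 1"
  proof -
    have "G 1 = 2 * G 1 * (2 * a^2 - 2 * a + 1) - (2*a - 1) * ((2*a - 1) * G 1)"
      by (simp add: algebra_simps power2_eq_square)
    moreover have "m dvd 2 * G 1 * (2 * a^2 - 2 * a + 1)" using dvdq by (rule dvd_mult)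
    moreover have "m dvd (2*a - 1) * ((2*a - 1) * G 1)" using h by (rule dvd_mult)
    ultimately show ?thesis by (metis dvd_diff)
  qed
  moreover have "G 1 = f 1 - f 0" using assms(1) by (simp add: G_def F_def)
  ultimately have "f 1 mod m = f 0 mod m" by (simp add: mod_eq_dvd_iff)
  moreover have z0: "0 \<in> zm m" and z1: "1 \<in> zm m" using assms(1) by (auto simp: zm_def)
  moreover have "f 1 \<in> zm m" "f 0 \<in> zm m" using bij z0 z1 by (auto dest: bij_betw_apply)
  ultimately have "f 1 = f 0" by (simp add: zm_def)
  then show False using bij z0 z1 by (metis bij_betw_def inj_on_def zero_neq_one)
qed

end
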